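(* Let $G$ be a graph, $b\ge 0$ an integer and $\beta:E(G)\to\{0,1,2,3\}$, and let $v\in V(G)$ be a vertex of degree one. Then $G-\{v\}$ admits a $b$-bend $\beta$-restricted RAC drawing (with $\beta$ restricted to $E(G-\{v\})$) if and only if $G$ admits a $b$-bend $\beta$-restricted RAC drawing.
   Context: All graphs are simple and undirected. A drawing of a graph $G=(V,E)$ maps vertices injectively to points of $\mathbb{R}^2$ and each edge $uv$ to a simple curve joining the images of $u$ and $v$, such that no vertex image lies in the relative interior of the image of an edge not incident to it. A polyline drawing is a drawing in which each edge is drawn as a union of closed straight-line segments $\lambda_1,\dots,\lambda_t$, where consecutive segments share exactly one endpoint and form an angle different from $180^\circ$, and non-consecutive segments are disjoint; the shared points of consecutive segments are the bends of the edge. A crossing of two edges is a common point of the relative interiors of their drawings; drawings have finitely many crossings. Two edges have a right-angle crossing if the crossing lies in the relative interiors of the respective segments and these segments are orthogonal. Given $b\in\mathbb{N}$ and $\beta:E\to\{0,1,2,3\}$, a $b$-bend $\beta$-restricted RAC drawing of $G$ is a polyline drawing in which every crossing is a right-angle crossing, the total number of bends is at most $b$, and each edge $e$ has at most $\beta(e)$ bends. *)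

theory Defs
  imports "HOL-Analysis.Analysis"
begin

type_synonym point = "real ^ 2"

definition simple_graph :: "'a set \<Rightarrow> 'a set set \<Rightarrow> bool" where
  "simple_graph V E \<longleftrightarrow> finite V \<and> (\<forall>e\<in>E. \<exists>u v. e = {u, v} \<and> u \<noteq> v \<and> u \<in> V \<and> v \<in> V)"

definition degree :: "'a set set \<Rightarrow> 'a \<Rightarrow> nat" where
  "degree E v = card {e \<in> E. v \<in> e}"

definition del_vertex_E :: "'a set set \<Rightarrow> 'a \<Rightarrow> 'a set set" where
  "del_vertex_E E v = {e \<in> E. v \<notin> e}"

text \<open>A polyline is given by the list of its points p_0, ..., p_t (t >= 1):
  endpoints p_0, p_t and bends p_1, ..., p_(t-1). The i-th segment is [p_i, p_(i+1)].\<close>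
definition seg :: "point list \<Rightarrow> nat \<Rightarrow> point set" where
  "seg ps i = closed_segment (ps ! i) (ps ! Suc i)"

definition nsegs :: "point list \<Rightarrow> nat" where
  "nsegs ps = length ps - 1"

definition curve :: "point list \<Rightarrow> point set" where
  "curve ps = (\<Union>i<nsegs ps. seg ps i)"

definition rel_interior_curve :: "point list \<Rightarrow> point set" where
  "rel_interior_curve ps = curve ps - {hd ps, last ps}"

definition nbends :: "point list \<Rightarrow> nat" where
  "nbends ps = length ps - 2"

definition polyline :: "point list \<Rightarrow> bool" where
  "polyline ps \<longleftrightarrow> length ps \<ge> 2
    \<and> (\<forall>i < nsegs ps. ps ! i \<noteq> ps ! Suc i)
    \<and> (\<forall>i. Suc i < nsegs ps \<longrightarrow>
          seg ps i \<inter> seg ps (Suc i) = {ps ! Suc i}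
          \<and> ps ! Suc i \<notin> open_segment (ps ! i) (ps ! Suc (Suc i)))
    \<and> (\<forall>i j. i < nsegs ps \<and> j < nsegs ps \<and> Suc i < j \<longrightarrow> seg ps i \<inter> seg ps j = {})"

definition crossings :: "point list \<Rightarrow> point list \<Rightarrow> point set" where
  "crossings ps qs = rel_interior_curve ps \<inter> rel_interior_curve qs"

definition polyline_drawing ::
  "'a set \<Rightarrow> 'a set set \<Rightarrow> ('a \<Rightarrow> point) \<Rightarrow> ('a set \<Rightarrow> point list) \<Rightarrow> bool" where
  "polyline_drawing V E pos D \<longleftrightarrow>
     inj_on pos V
   \<and> (\<forall>e\<in>E. polyline (D e) \<and> {hd (D e), last (D e)} = pos ` e)
   \<and> (\<forall>e\<in>E. \<forall>w\<in>V. w \<notin> e \<longrightarrow> pos w \<notin> rel_interior_curve (D e))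
   \<and> (\<forall>e\<in>E. \<forall>f\<in>E. e \<noteq> f \<longrightarrow> finite (crossings (D e) (D f)))"

definition right_angle_crossing :: "point list \<Rightarrow> point list \<Rightarrow> point \<Rightarrow> bool" where
  "right_angle_crossing ps qs x \<longleftrightarrow>
     (\<exists>i < nsegs ps. \<exists>j < nsegs qs.
        x \<in> open_segment (ps ! i) (ps ! Suc i) \<and> x \<in> open_segment (qs ! j) (qs ! Suc j)
      \<and> orthogonal (ps ! Suc i - ps ! i) (qs ! Suc j - qs ! j))"

definition restricted_RAC_drawing ::
  "'a set \<Rightarrow> 'a set set \<Rightarrow> nat \<Rightarrow> ('a set \<Rightarrow> nat) \<Rightarrow> ('a \<Rightarrow> point) \<Rightarrow> ('a set \<Rightarrow> point list) \<Rightarrow> bool" where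
  "restricted_RAC_drawing V E b \<beta> pos D \<longleftrightarrow>
     polyline_drawing V E pos D
   \<and> (\<forall>e\<in>E. \<forall>f\<in>E. e \<noteq> f \<longrightarrow> (\<forall>x \<in> crossings (D e) (D f). right_angle_crossing (D e) (D f) x))
   \<and> (\<Sum>e\<in>E. nbends (D e)) \<le> b
   \<and> (\<forall>e\<in>E. nbends (D e) \<le> \<beta> e)"

definition admits_restricted_RAC ::
  "'a set \<Rightarrow> 'a set set \<Rightarrow> nat \<Rightarrow> ('a set \<Rightarrow> nat) \<Rightarrow> bool" where
  "admits_restricted_RAC V E b \<beta> \<longleftrightarrow> (\<exists>pos D. restricted_RAC_drawing V E b \<beta> pos D)"

end

theory Submission
  imports Defs
begin

lemma seg_avoid:
  fixes x :: point and F :: "(point \<times> point) set"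
  assumes "finite F"
  shows "\<exists>p. p \<noteq> x \<and> (\<forall>(a,c)\<in>F. closed_segment x p \<inter> closed_segment a c \<subseteq> {x})"
proof -
  let ?K = "(\<lambda>(a,c). (c-a)$2 / (c-a)$1) ` F"
  have "finite ?K" using assms by simp
  then obtain k :: real where k: "k \<notin> ?K"
    using ex_new_if_finite[OF infinite_UNIV_char_0] by blast
  define d :: point where "d = vector [1, k]"
  have d1: "d$1 = 1" and d2: "d$2 = k" by (simp_all add: d_def)
  have dnz: "d \<noteq> 0" using d1 by auto
  have A: "closed_segment x (x + t *\<^sub>R d) \<inter> closed_segment a c \<subseteq> {x}"
    if ac: "(a,c) \<in> F" and xin: "x \<in> closed_segment a c" and t: "t > 0" for a c t
  proof
    fix y assume y: "y \<in> closed_segment x (x + t *\<^sub>R d) \<inter> closed_segment a c"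
    show "y \<in> {x}"
    proof (rule ccontr)
      assume yx: "y \<notin> {x}"
      from y obtain s where s: "0 \<le> s" "s \<le> 1" "y = (1 - s) *\<^sub>R x + s *\<^sub>R (x + t *\<^sub>R d)"
        unfolding closed_segment_def by auto
      from y obtain g where g: "0 \<le> g" "g \<le> 1" "y = (1 - g) *\<^sub>R a + g *\<^sub>R c"
        unfolding closed_segment_def by auto
      from xin obtain al where al: "0 \<le> al" "al \<le> 1" "x = (1 - al) *\<^sub>R a + al *\<^sub>R c"
        unfolding closed_segment_def by auto
      have ye: "y = x + (s*t) *\<^sub>R d" using s(3) by (simp add: algebra_simps)
      have sne: "s \<noteq> 0" using yx ye by auto
      have eq: "(s*t) *\<^sub>R d = (g - al) *\<^sub>R (c - a)"
        using ye g(3) al(3) by (simp add: algebra_simps)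
      have e1: "s*t = (g - al) * (c-a)$1" using arg_cong[OF eq, of "\<lambda>z. z$1"] d1 by simp
      have e2: "s*t*k = (g - al) * (c-a)$2" using arg_cong[OF eq, of "\<lambda>z. z$2"] d2 by simp
      have stn: "s*t \<noteq> 0" using sne t by simp
      hence c1: "(c-a)$1 \<noteq> 0" using e1 by auto
      have "k = (c-a)$2 / (c-a)$1"
      proof -
        have gn: "g - al \<noteq> 0" using e1 stn by auto
        have "(g - al) * ((c-a)$1 * k) = ((g - al) * (c-a)$1) * k" by (simp only: mult.assoc)
        also have "\<dots> = s*t*k" using e1 by simp
        also have "\<dots> = (g - al) * (c-a)$2" using e2 by simp
        finally have "(g - al) * ((c-a)$1 * k) = (g - al) * (c-a)$2" .
        hence "(c-a)$1 * k = (c-a)$2" using gn by simp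
        thus ?thesis using c1 by (simp add: field_simps)
      qed
      thus False using k ac by force
    qed
  qed
  have B: "\<forall>\<^sub>F t in at_right 0. closed_segment x (x + t *\<^sub>R d) \<inter> closed_segment a c = {}"
    if xin: "x \<notin> closed_segment a c" for a c
  proof -
    have "open (- closed_segment a c)" by auto
    then obtain e where e: "e > 0" "ball x e \<subseteq> - closed_segment a c"
      using xin open_contains_ball by blast
    have nd: "norm d > 0" using dnz by simp
    show ?thesis unfolding eventually_at_right_field
    proof (intro exI[of _ "e / norm d"] conjI allI impI)
      show "0 < e / norm d" using e nd by simp
      fix t :: real assume t: "0 < t" "t < e / norm d"
      have "t * norm d < e" using t nd by (simp add: pos_less_divide_eq)
      hence "x + t *\<^sub>R d \<in> ball x e" using t by (simp add: dist_norm)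
      hence "closed_segment x (x + t *\<^sub>R d) \<subseteq> ball x e"
        using e(1) by (intro closed_segment_subset) auto
      thus "closed_segment x (x + t *\<^sub>R d) \<inter> closed_segment a c = {}" using e by blast
    qed
  qed
  have ev: "\<forall>\<^sub>F t in at_right 0. \<forall>ac\<in>F. closed_segment x (x + t *\<^sub>R d) \<inter> closed_segment (fst ac) (snd ac) \<subseteq> {x}"
  proof (rule eventually_ball_finite[OF assms], rule ballI)
    fix ac assume acF: "ac \<in> F"
    obtain a c where acd: "ac = (a,c)" by fastforce
    show "\<forall>\<^sub>F t in at_right 0. closed_segment x (x + t *\<^sub>R d) \<inter> closed_segment (fst ac) (snd ac) \<subseteq> {x}"
    proof (cases "x \<in> closed_segment a c")
      case True
      have "\<forall>\<^sub>F t in at_right (0::real). t > 0" by (simp add: eventually_at_right_less)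
      thus ?thesis by eventually_elim (use A[of a c] True acF acd in auto)
    next
      case False
      from B[OF False] show ?thesis by eventually_elim (auto simp: acd)
    qed
  qed
  have "\<forall>\<^sub>F t in at_right (0::real). t > 0" by (simp add: eventually_at_right_less)
  with ev have "\<forall>\<^sub>F t in at_right (0::real). t > 0 \<and> (\<forall>ac\<in>F. closed_segment x (x + t *\<^sub>R d) \<inter> closed_segment (fst ac) (snd ac) \<subseteq> {x})"
    by eventually_elim auto
  then obtain t where t: "t > 0" "\<forall>ac\<in>F. closed_segment x (x + t *\<^sub>R d) \<inter> closed_segment (fst ac) (snd ac) \<subseteq> {x}"
    using eventually_happens[of _ "at_right (0::real)"] trivial_limit_at_right_real by blast
  show ?thesis
    by (rule exI[of _ "x + t *\<^sub>R d"]) (use t dnz in fastforce)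
qed

lemma curve2: "curve [x, p] = closed_segment x p"
  by (simp add: curve_def nsegs_def seg_def lessThan_Suc)

lemma polyline2: "x \<noteq> p \<Longrightarrow> polyline [x, p]"
  by (simp add: polyline_def nsegs_def)

lemma nbends2: "nbends [x, p] = 0" by (simp add: nbends_def)

lemma restrict_RAC:
  assumes dr: "restricted_RAC_drawing V E b \<beta> pos D" and VV: "V' \<subseteq> V" and EE: "E' \<subseteq> E" and fin: "finite E"
  shows "restricted_RAC_drawing V' E' b \<beta> pos D"
proof -
  note drd = dr[unfolded restricted_RAC_drawing_def polyline_drawing_def]
  note P = conjunct1[OF drd] and Q = conjunct2[OF drd]
  note inj0 = conjunct1[OF P] and poly0 = conjunct1[OF conjunct2[OF P]]
    and vert0 = conjunct1[OF conjunct2[OF conjunct2[OF P]]]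
    and fin0 = conjunct2[OF conjunct2[OF conjunct2[OF P]]]
    and rac0 = conjunct1[OF Q] and sum0 = conjunct1[OF conjunct2[OF Q]]
    and beta0 = conjunct2[OF conjunct2[OF Q]]
  have "(\<Sum>e\<in>E'. nbends (D e)) \<le> (\<Sum>e\<in>E. nbends (D e))"
    by (rule sum_mono2[OF fin EE]) simp
  hence s: "(\<Sum>e\<in>E'. nbends (D e)) \<le> b" using sum0 by linarith
  have i: "inj_on pos V'" by (rule inj_on_subset[OF inj0 VV])
  have a: "\<forall>e\<in>E'. polyline (D e) \<and> {hd (D e), last (D e)} = pos ` e"
    using poly0 EE by blast
  have c: "\<forall>e\<in>E'. \<forall>w\<in>V'. w \<notin> e \<longrightarrow> pos w \<notin> rel_interior_curve (D e)"
    using vert0 EE VV by blast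
  have d: "\<forall>e\<in>E'. \<forall>f\<in>E'. e \<noteq> f \<longrightarrow> finite (crossings (D e) (D f))"
    using fin0 EE by blast
  have r: "\<forall>e\<in>E'. \<forall>f\<in>E'. e \<noteq> f \<longrightarrow> (\<forall>x \<in> crossings (D e) (D f). right_angle_crossing (D e) (D f) x)"
    using rac0 EE by blast
  have bb: "\<forall>e\<in>E'. nbends (D e) \<le> \<beta> e" using beta0 EE by blast
  show ?thesis unfolding restricted_RAC_drawing_def polyline_drawing_def
    using i a c d r s bb by (intro conjI)
qed

theorem mainTheorem2:
  fixes V :: "'a set" and E :: "'a set set" and b :: nat and \<beta> :: "'a set \<Rightarrow> nat" and v :: 'a
  assumes "simple_graph V E"
    and "\<forall>e\<in>E. \<beta> e \<le> 3"
    and "v \<in> V"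
    and "degree E v = 1"
  shows "admits_restricted_RAC (V - {v}) (del_vertex_E E v) b \<beta> \<longleftrightarrow> admits_restricted_RAC V E b \<beta>"
proof -
  have finV: "finite V" using assms(1) by (simp add: simple_graph_def)
  have EP: "E \<subseteq> Pow V"
  proof
    fix e assume "e \<in> E"
    then obtain a c where "e = {a,c}" "a \<in> V" "c \<in> V"
      using assms(1) unfolding simple_graph_def by blast
    thus "e \<in> Pow V" by auto
  qed
  have finE: "finite E" by (rule finite_subset[OF EP]) (simp add: finV)
  obtain e0 where e0: "{e\<in>E. v \<in> e} = {e0}"
    using card_1_singletonE[OF assms(4)[unfolded degree_def]] by blast
  have e0E: "e0 \<in> E" and ve0: "v \<in> e0" using e0 by auto
  obtain a c where ac: "e0 = {a,c}" "a \<noteq> c" "a \<in> V" "c \<in> V"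
    using assms(1) e0E unfolding simple_graph_def by blast
  obtain u where u: "e0 = {v, u}" "u \<noteq> v" "u \<in> V"
  proof (cases "a = v")
    case True thus ?thesis using that[of c] ac by auto
  next
    case False hence "c = v" using ac ve0 by auto
    thus ?thesis using that[of a] ac by auto
  qed
  define E' where "E' = del_vertex_E E v"
  have E'eq: "E' = E - {e0}" using e0 unfolding E'_def del_vertex_E_def by blast
  have Eeq: "E = insert e0 E'" using E'eq e0E by blast
  have e0E': "e0 \<notin> E'" using E'eq by blast
  have vE': "\<And>e. e \<in> E' \<Longrightarrow> v \<notin> e" unfolding E'_def del_vertex_E_def by blast
  show ?thesis unfolding E'_def[symmetric]
  proof
    assume "admits_restricted_RAC V E b \<beta>"
    then obtain pos D where "restricted_RAC_drawing V E b \<beta> pos D"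
      unfolding admits_restricted_RAC_def by blast
    hence "restricted_RAC_drawing (V - {v}) E' b \<beta> pos D"
      by (rule restrict_RAC) (use finE E'eq in auto)
    thus "admits_restricted_RAC (V - {v}) E' b \<beta>"
      unfolding admits_restricted_RAC_def by blast
  next
    assume "admits_restricted_RAC (V - {v}) E' b \<beta>"
    then obtain pos D where dr: "restricted_RAC_drawing (V - {v}) E' b \<beta> pos D"
      unfolding admits_restricted_RAC_def by blast
    note drd = dr[unfolded restricted_RAC_drawing_def polyline_drawing_def]
    note P = conjunct1[OF drd] and Q = conjunct2[OF drd]
    note inj0 = conjunct1[OF P] and poly0 = conjunct1[OF conjunct2[OF P]]
      and vert0 = conjunct1[OF conjunct2[OF conjunct2[OF P]]]
      and fin0 = conjunct2[OF conjunct2[OF conjunct2[OF P]]]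
      and rac0 = conjunct1[OF Q] and sum0 = conjunct1[OF conjunct2[OF Q]]
      and beta0 = conjunct2[OF conjunct2[OF Q]]
    define x where "x = pos u"
    define F where "F = (\<Union>f\<in>E'. (\<lambda>i. (D f ! i, D f ! Suc i)) ` {..<nsegs (D f)})
                        \<union> (\<lambda>w. (pos w, pos w)) ` (V - {v})"
    have finF: "finite F" unfolding F_def using finE E'eq finV by auto
    obtain p where p: "p \<noteq> x" "\<forall>(a,c)\<in>F. closed_segment x p \<inter> closed_segment a c \<subseteq> {x}"
      using seg_avoid[OF finF] by blast
    have pF: "closed_segment x p \<inter> closed_segment a c \<subseteq> {x}" if "(a,c) \<in> F" for a c
      using p(2) that by auto
    have avoid_curve: "curve (D f) \<inter> closed_segment x p \<subseteq> {x}" if "f \<in> E'" for f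
    proof
      fix y assume y: "y \<in> curve (D f) \<inter> closed_segment x p"
      then obtain i where i: "i < nsegs (D f)" "y \<in> closed_segment (D f ! i) (D f ! Suc i)"
        unfolding curve_def seg_def by auto
      have "(D f ! i, D f ! Suc i) \<in> F" unfolding F_def using that i by blast
      from pF[OF this] show "y \<in> {x}" using y i by blast
    qed
    have avoid_vert: "pos w \<notin> closed_segment x p" if "w \<in> V - {v}" "w \<noteq> u" for w
    proof
      assume w: "pos w \<in> closed_segment x p"
      have "(pos w, pos w) \<in> F" unfolding F_def using that by blast
      from pF[OF this] have "pos w = x" using w by auto
      have uV: "u \<in> V - {v}" using u by auto
      have "pos w = pos u" using \<open>pos w = x\<close> x_def by simp
      from inj_onD[OF inj0 this that(1) uV] show False using that(2) by simp
    qed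
    have p_notvert: "p \<noteq> pos w" if "w \<in> V - {v}" for w
    proof (cases "w = u")
      case True thus ?thesis using p(1) x_def by simp
    next
      case False thus ?thesis using avoid_vert[OF that] by auto
    qed
    have p_notcurve: "p \<notin> curve (D f)" if "f \<in> E'" for f
      using avoid_curve[OF that] p(1) by auto
    have nocross: "crossings [x, p] (D f) = {}" "crossings (D f) [x, p] = {}" if "f \<in> E'" for f
      using avoid_curve[OF that]
      unfolding crossings_def rel_interior_curve_def curve2 by auto
    define pos' where "pos' = pos(v := p)"
    define D' where "D' = D(e0 := [x, p])"
    have D'e0: "D' e0 = [x, p]" by (simp add: D'_def)
    have D'f: "D' f = D f" if "f \<in> E'" for f using that e0E' D'_def by auto
    have pos'v: "pos' v = p" by (simp add: pos'_def)
    have pos'w: "pos' w = pos w" if "w \<noteq> v" for w using that by (simp add: pos'_def)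
    have "restricted_RAC_drawing V E b \<beta> pos' D'"
      unfolding restricted_RAC_drawing_def polyline_drawing_def
    proof (intro conjI)
      show "inj_on pos' V"
      proof -
        have h1: "inj_on pos' (V - {v})" using inj0 inj_on_cong[of "V - {v}" pos' pos] pos'w by auto
        have h2: "pos' v \<notin> pos' ` (V - {v})" using p_notvert pos'v pos'w by auto
        have Veq: "V = insert v (V - {v})" using assms(3) by blast
        show ?thesis apply (subst Veq) apply (subst inj_on_insert) using h1 h2 by auto
      qed
      show "\<forall>e\<in>E. polyline (D' e) \<and> {hd (D' e), last (D' e)} = pos' ` e"
      proof
        fix e assume "e \<in> E"
        then consider "e = e0" | "e \<in> E'" using Eeq by blast
        thus "polyline (D' e) \<and> {hd (D' e), last (D' e)} = pos' ` e"
        proof cases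
          case 1 thus ?thesis using polyline2[of x p] p(1) D'e0 u pos'v pos'w x_def by auto
        next
          case 2
          have "\<And>w. w \<in> e \<Longrightarrow> pos' w = pos w" using pos'w vE'[OF 2] by metis
          hence "pos' ` e = pos ` e" by (rule image_cong[OF refl])
          thus ?thesis using poly0 2 D'f by auto
        qed
      qed
      show "\<forall>e\<in>E. \<forall>w\<in>V. w \<notin> e \<longrightarrow> pos' w \<notin> rel_interior_curve (D' e)"
      proof (intro ballI impI)
        fix e w assume e: "e \<in> E" and w: "w \<in> V" "w \<notin> e"
        from e consider "e = e0" | "e \<in> E'" using Eeq by blast
        thus "pos' w \<notin> rel_interior_curve (D' e)"
        proof cases
          case 1
          hence "w \<noteq> u" "w \<noteq> v" using w u by auto
          thus ?thesis using avoid_vert[of w] w pos'w 1 D'e0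
            unfolding rel_interior_curve_def by (auto simp: curve2)
        next
          case 2
          show ?thesis
          proof (cases "w = v")
            case True thus ?thesis using p_notcurve[OF 2] pos'v D'f[OF 2]
              unfolding rel_interior_curve_def by auto
          next
            case False thus ?thesis using vert0 2 w pos'w D'f[OF 2] by auto
          qed
        qed
      qed
      have cr: "(e \<in> E' \<and> f \<in> E') \<or> crossings (D' e) (D' f) = {}"
        if "e \<in> E" "f \<in> E" "e \<noteq> f" for e f
      proof -
        from that consider "e = e0" "f \<in> E'" | "f = e0" "e \<in> E'" | "e \<in> E'" "f \<in> E'"
          using Eeq by blast
        thus ?thesis
        proof cases
          case 1 thus ?thesis using nocross D'e0 D'f by auto
        next
          case 2 thus ?thesis using nocross D'e0 D'f by auto
        next
          case 3 thus ?thesis by auto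
        qed
      qed
      show "\<forall>e\<in>E. \<forall>f\<in>E. e \<noteq> f \<longrightarrow> finite (crossings (D' e) (D' f))"
      proof (intro ballI impI)
        fix e f assume ef: "e \<in> E" "f \<in> E" "e \<noteq> f"
        from cr[OF ef] show "finite (crossings (D' e) (D' f))"
        proof
          assume "e \<in> E' \<and> f \<in> E'"
          thus ?thesis using fin0 ef D'f by auto
        qed simp
      qed
      show "\<forall>e\<in>E. \<forall>f\<in>E. e \<noteq> f \<longrightarrow> (\<forall>y \<in> crossings (D' e) (D' f). right_angle_crossing (D' e) (D' f) y)"
      proof (intro ballI impI)
        fix e f y assume ef: "e \<in> E" "f \<in> E" "e \<noteq> f" and y: "y \<in> crossings (D' e) (D' f)"
        from cr[OF ef] show "right_angle_crossing (D' e) (D' f) y"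
        proof
          assume "e \<in> E' \<and> f \<in> E'"
          thus ?thesis using rac0 ef y D'f by auto
        qed (use y in simp)
      qed
      have "(\<Sum>e\<in>E. nbends (D' e)) = nbends (D' e0) + (\<Sum>e\<in>E'. nbends (D' e))"
        unfolding E'eq by (rule sum.remove[OF finE e0E])
      also have "\<dots> = (\<Sum>e\<in>E'. nbends (D e))"
        by (auto simp: D'e0 nbends2 D'f intro!: sum.cong)
      also have "\<dots> \<le> b" using sum0 by blast
      finally show "(\<Sum>e\<in>E. nbends (D' e)) \<le> b" .
      show "\<forall>e\<in>E. nbends (D' e) \<le> \<beta> e"
      proof
        fix e assume "e \<in> E"
        then consider "e = e0" | "e \<in> E'" using Eeq by blast
        thus "nbends (D' e) \<le> \<beta> e"
        proof cases
          case 1 thus ?thesis using D'e0 nbends2 by simp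
        next
          case 2 thus ?thesis using beta0 D'f by auto
        qed
      qed
    qed
    thus "admits_restricted_RAC V E b \<beta>" unfolding admits_restricted_RAC_def by blast
  qed
qed

end
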